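(* Let $\lambda\in\mathbb Q\cup\{\infty\}$, $i\in\{2,3,6\}$ and $\ell\in\mathbb Z_{>0}$ not divisible by $i$. Write $\lambda=b/a$ with $a\in\mathbb N$, $b\in\mathbb Z$, $\gcd(a,b)=\ell$ (for $\lambda=\infty$ take $a=0$, $b=\ell$), and write $a=ia'+a''$, $b=ib'+b''$ with $a',a'',b',b''\in\mathbb Z$, $0\le a'',b''\le i-1$. Then $$R^\lambda_\ell(i)=\{a'h_0+b'h_\infty+r\mid r\in R_{[a'',b'']}(i)\}.$$
   Context: Let $V=\{1_1,1_2,2_1,2_2,3_0,3_1,4_0,4_1,5_{-1},5_0\}$ and identify $\mathbb Z^{10}=\mathbb Z^V$. Let $A$ be the set of 12 arrows $2_2\to1_2$, $1_2\to2_1$, $3_1\to2_1$, $2_2\to3_1$, $4_1\to3_1$, $3_1\to4_0$, $5_0\to4_0$, $4_1\to5_0$, $2_1\to1_1$, $2_1\to3_0$, $4_0\to3_0$, $4_0\to5_{-1}$, and let $P=\{(2_2,2_1),(4_1,4_0),(1_2,1_1),(3_1,3_0),(5_0,5_{-1})\}$. The Ringel form is $\langle d,e\rangle=\sum_{v\in V}d_ve_v-\sum_{(v\to w)\in A}d_ve_w+\sum_{(v,w)\in P}d_ve_w$. Write $\langle d,e\rangle=d^{t}Ee$ and $\Phi=-E^{-1}E^{t}$ (integral, $\Phi^6=\mathrm{id}$). Let $q(d)=\langle d,d\rangle$, $R=\{d\neq0: q(d)\in\{0,1\}\}$. Let $h_0$ have entries $(1,1,3,0,2,2,3,0,1,1)$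 and $h_\infty$ entries $(0,1,1,1,0,2,1,1,0,1)$ at the vertices $(1_1,1_2,2_1,2_2,3_0,3_1,4_0,4_1,5_{-1},5_0)$. $R^+=\{d\in R: \langle d,h_\infty\rangle>0\text{ or }(\langle d,h_\infty\rangle=0\text{ and }\langle h_0,d\rangle>0)\}$; the slope of $d\in R^+$ is $\langle h_0,d\rangle/\langle d,h_\infty\rangle\in\mathbb Q\cup\{\infty\}$, $R^\lambda$ the positive roots of slope $\lambda$. $\operatorname{rk}(d)$ is the least $m\ge1$ with $\Phi^m(d)=d$, $h(d)=\sum_{j=1}^{\operatorname{rk}(d)}\Phi^j(d)$, $\operatorname{ql}(d)$ the gcd of the entries of $h(d)$, and $R^\lambda_\ell(i)=\{d\in R^\lambda:\operatorname{rk}(d)=i,\operatorname{ql}(d)=\ell\}$. For $0\le m,n\le i-1$, $(m,n)\ne(0,0)$, set $R_{[m,n]}(i)=R^{n/m}_{\gcd(m,n)}(i)$ (with $n/0=\infty$). *)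

theory Defs
  imports Complex_Main
begin

text \<open>Vertex set V, in the order (1_1,1_2,2_1,2_2,3_0,3_1,4_0,4_1,5_{-1},5_0).
  V5m1 stands for 5_{-1}.\<close>
datatype vert = V1_1 | V1_2 | V2_1 | V2_2 | V3_0 | V3_1 | V4_0 | V4_1 | V5m1 | V5_0

lemma UNIV_vert: "(UNIV :: vert set) = {V1_1, V1_2, V2_1, V2_2, V3_0, V3_1, V4_0, V4_1, V5m1, V5_0}"
  using vert.exhaust by auto

instance vert :: finite
  by standard (simp add: UNIV_vert)

type_synonym zvec = "vert \<Rightarrow> int"

definition arrows :: "(vert \<times> vert) list" where
  "arrows = [(V2_2,V1_2), (V1_2,V2_1), (V3_1,V2_1), (V2_2,V3_1), (V4_1,V3_1), (V3_1,V4_0),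
             (V5_0,V4_0), (V4_1,V5_0), (V2_1,V1_1), (V2_1,V3_0), (V4_0,V3_0), (V4_0,V5m1)]"

definition Ppairs :: "(vert \<times> vert) list" where
  "Ppairs = [(V2_2,V2_1), (V4_1,V4_0), (V1_2,V1_1), (V3_1,V3_0), (V5_0,V5m1)]"

text \<open>Matrix E of the Ringel form: <d,e> = d^t E e.\<close>
definition Emat :: "vert \<Rightarrow> vert \<Rightarrow> int" where
  "Emat v w = (if v = w then 1 else 0)
     - int (length (filter (\<lambda>p. p = (v,w)) arrows))
     + int (length (filter (\<lambda>p. p = (v,w)) Ppairs))"

definition ringel :: "zvec \<Rightarrow> zvec \<Rightarrow> int" where
  "ringel d e = (\<Sum>v\<in>UNIV. d v * e v)
     - (\<Sum>(v,w)\<leftarrow>arrows. d v * e w)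
     + (\<Sum>(v,w)\<leftarrow>Ppairs. d v * e w)"

text \<open>Coxeter transformation \<Phi> = -E^{-1} E^t: \<Phi> d is the (unique) vector x with E x = - E^t d.\<close>
definition Phi :: "zvec \<Rightarrow> zvec" where
  "Phi d = (THE x. \<forall>v. (\<Sum>w\<in>UNIV. Emat v w * x w) = - (\<Sum>w\<in>UNIV. Emat w v * d w))"

definition qform :: "zvec \<Rightarrow> int" where
  "qform d = ringel d d"

definition Roots :: "zvec set" where
  "Roots = {d. d \<noteq> (\<lambda>_. 0) \<and> qform d \<in> {0,1}}"

definition h0 :: zvec where
  "h0 v = (case v of V1_1 \<Rightarrow> 1 | V1_2 \<Rightarrow> 1 | V2_1 \<Rightarrow> 3 | V2_2 \<Rightarrow> 0 | V3_0 \<Rightarrow> 2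
     | V3_1 \<Rightarrow> 2 | V4_0 \<Rightarrow> 3 | V4_1 \<Rightarrow> 0 | V5m1 \<Rightarrow> 1 | V5_0 \<Rightarrow> 1)"

definition hinf :: zvec where
  "hinf v = (case v of V1_1 \<Rightarrow> 0 | V1_2 \<Rightarrow> 1 | V2_1 \<Rightarrow> 1 | V2_2 \<Rightarrow> 1 | V3_0 \<Rightarrow> 0
     | V3_1 \<Rightarrow> 2 | V4_0 \<Rightarrow> 1 | V4_1 \<Rightarrow> 1 | V5m1 \<Rightarrow> 0 | V5_0 \<Rightarrow> 1)"

definition Rplus :: "zvec set" where
  "Rplus = {d \<in> Roots. ringel d hinf > 0 \<or> (ringel d hinf = 0 \<and> ringel h0 d > 0)}"

text \<open>Slopes live in \<rat> \<union> {\<infinity>}, represented as rat option with None = \<infinity>.\<close>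
definition slope :: "zvec \<Rightarrow> rat option" where
  "slope d = (if ringel d hinf = 0 then None
              else Some (of_int (ringel h0 d) / of_int (ringel d hinf)))"

definition Rslope :: "rat option \<Rightarrow> zvec set" where
  "Rslope lam = {d \<in> Rplus. slope d = lam}"

definition rk :: "zvec \<Rightarrow> nat" where
  "rk d = (LEAST m. m \<ge> 1 \<and> (Phi ^^ m) d = d)"

definition hvec :: "zvec \<Rightarrow> zvec" where
  "hvec d = (\<lambda>v. \<Sum>j=1..rk d. (Phi ^^ j) d v)"

definition ql :: "zvec \<Rightarrow> int" where
  "ql d = Gcd (range (hvec d))"

definition Rsl :: "rat option \<Rightarrow> int \<Rightarrow> nat \<Rightarrow> zvec set" where
  "Rsl lam l i = {d \<in> Rslope lam. rk d = i \<and> ql d = l}"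

definition Rbr :: "int \<Rightarrow> int \<Rightarrow> nat \<Rightarrow> zvec set" where
  "Rbr m n i = Rsl (if m = 0 then None else Some (of_int n / of_int m)) (gcd m n) i"

end

theory Submission
  imports Defs
begin

lemma sum_vert: "(\<Sum>w\<in>UNIV. f w) = f V1_1 + f V1_2 + f V2_1 + f V2_2 + f V3_0 + f V3_1 + f V4_0 + f V4_1 + f V5m1 + f V5_0"
  by (simp add: UNIV_vert add.assoc)

definition PhiE :: "zvec \<Rightarrow> zvec" where
  "PhiE d = (\<lambda>v. case v of
    V1_1 \<Rightarrow> - d V1_1 - d V1_2 + d V2_1
  |     V1_2 \<Rightarrow> - d V3_0 + d V4_0
  |     V2_1 \<Rightarrow> - d V1_1 + d V2_1 - d V2_2 - d V3_0 + d V4_0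
  |     V2_2 \<Rightarrow> - d V3_0 + d V4_0 - d V5m1
  |     V3_0 \<Rightarrow> d V2_1 - d V3_0 - d V3_1 + d V4_0
  |     V3_1 \<Rightarrow> - d V1_1 + d V2_1 - d V3_0 + d V4_0 - d V5m1
  |     V4_0 \<Rightarrow> d V2_1 - d V3_0 + d V4_0 - d V4_1 - d V5m1
  |     V4_1 \<Rightarrow> - d V1_1 + d V2_1 - d V3_0
  |     V5m1 \<Rightarrow> d V4_0 - d V5m1 - d V5_0
  |     V5_0 \<Rightarrow> d V2_1 - d V3_0)"

definition Phi2 :: "zvec \<Rightarrow> zvec" where
  "Phi2 d = (\<lambda>v. case v of
    V1_1 \<Rightarrow> d V1_2 - d V2_2
  |     V1_2 \<Rightarrow> d V3_1 - d V4_1 - d V5m1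
  |     V2_1 \<Rightarrow> d V1_2 - d V2_2 + d V3_1 - d V4_1
  |     V2_2 \<Rightarrow> d V3_1 - d V4_0 - d V4_1 + d V5_0
  |     V3_0 \<Rightarrow> - d V2_2 + d V3_1 - d V4_1
  |     V3_1 \<Rightarrow> d V1_2 - d V2_2 - d V3_0 + d V3_1 - d V4_1 + d V5_0
  |     V4_0 \<Rightarrow> - d V2_2 + d V3_1 - d V4_1 + d V5_0
  |     V4_1 \<Rightarrow> d V1_2 - d V2_1 - d V2_2 + d V3_1
  |     V5m1 \<Rightarrow> - d V4_1 + d V5_0
  |     V5_0 \<Rightarrow> - d V1_1 - d V2_2 + d V3_1)"

definition Phi3 :: "zvec \<Rightarrow> zvec" where
  "Phi3 d = (\<lambda>v. case v of
    V1_1 \<Rightarrow> d V5m1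
  |     V1_2 \<Rightarrow> d V5_0
  |     V2_1 \<Rightarrow> d V4_0
  |     V2_2 \<Rightarrow> d V4_1
  |     V3_0 \<Rightarrow> d V3_0
  |     V3_1 \<Rightarrow> d V3_1
  |     V4_0 \<Rightarrow> d V2_1
  |     V4_1 \<Rightarrow> d V2_2
  |     V5m1 \<Rightarrow> d V1_1
  |     V5_0 \<Rightarrow> d V1_2)"

lemma Phi_eq: "Phi d = PhiE d"
  unfolding Phi_def
proof (rule the_equality)
  show "\<forall>v. (\<Sum>w\<in>UNIV. Emat v w * PhiE d w) = - (\<Sum>w\<in>UNIV. Emat w v * d w)"
  proof
    fix v show "(\<Sum>w\<in>UNIV. Emat v w * PhiE d w) = - (\<Sum>w\<in>UNIV. Emat w v * d w)"
      by (cases v) (simp_all add: sum_vert Emat_def arrows_def Ppairs_def PhiE_def)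
  qed
next
  fix x assume h: "\<forall>v. (\<Sum>w\<in>UNIV. Emat v w * x w) = - (\<Sum>w\<in>UNIV. Emat w v * d w)"
  have e: "\<And>v. (\<Sum>w\<in>UNIV. Emat v w * x w) = - (\<Sum>w\<in>UNIV. Emat w v * d w)" using h by blast
  note e1 = e[of V1_1] e[of V1_2] e[of V2_1] e[of V2_2] e[of V3_0] e[of V3_1] e[of V4_0] e[of V4_1] e[of V5m1] e[of V5_0]
  note e2 = e1[simplified sum_vert Emat_def arrows_def Ppairs_def, simplified]
  show "x = PhiE d"
    by (rule ext, case_tac xa; simp add: PhiE_def; insert e2; linarith)
qed

lemma Phi2_eq: "PhiE (PhiE d) = Phi2 d"
  by (rule ext, case_tac x) (simp_all add: PhiE_def Phi2_def)
lemma Phi3_eq: "PhiE (Phi2 d) = Phi3 d"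
  by (rule ext, case_tac x) (simp_all add: PhiE_def Phi2_def Phi3_def)
lemma Phi6: "Phi3 (Phi3 d) = d"
  by (rule ext, case_tac x) (simp_all add: Phi3_def)
lemma Phi3_alt: "Phi3 d = PhiE (PhiE (PhiE d))"
  by (simp add: Phi2_eq Phi3_eq)
lemma PhiE6: "(PhiE ^^ 6) d = d"
proof -
  have "(PhiE ^^ 6) d = PhiE (PhiE (PhiE (PhiE (PhiE (PhiE d)))))"
    by (simp add: numeral_eq_Suc)
  also have "\<dots> = Phi3 (Phi3 d)" by (simp only: Phi3_alt)
  finally show ?thesis by (simp add: Phi6)
qed


lemma Phi_eq': "Phi = PhiE" using Phi_eq by blast

definition alpha :: "zvec \<Rightarrow> int" where
  "alpha d = d V2_1 - d V2_2 + d V4_0 - d V4_1"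
definition beta :: "zvec \<Rightarrow> int" where
  "beta d = - d V1_1 + d V1_2 - 2 * d V3_0 + 2 * d V3_1 - d V5m1 + d V5_0"

lemma ringel_hinf: "ringel d hinf = alpha d"
  by (simp add: ringel_def sum_vert arrows_def Ppairs_def hinf_def alpha_def)
lemma ringel_h0: "ringel h0 d = beta d"
  by (simp add: ringel_def sum_vert arrows_def Ppairs_def h0_def beta_def)
lemma alpha_PhiE: "alpha (PhiE d) = alpha d"
  by (simp add: alpha_def PhiE_def)
lemma beta_PhiE: "beta (PhiE d) = beta d"
  by (simp add: beta_def PhiE_def)
lemma alpha_pow: "alpha ((PhiE ^^ j) d) = alpha d"
  by (induction j) (simp_all add: alpha_PhiE)
lemma beta_pow: "beta ((PhiE ^^ j) d) = beta d"
  by (induction j) (simp_all add: beta_PhiE)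

lemma PhiE_lin: "PhiE (\<lambda>v. d v - (p * h0 v + q * hinf v)) = (\<lambda>v. PhiE d v - (p * h0 v + q * hinf v))"
  by (rule ext, case_tac v) (simp_all add: PhiE_def h0_def hinf_def algebra_simps)

lemma pow_lin: "(PhiE ^^ m) (\<lambda>v. d v - (p * h0 v + q * hinf v)) = (\<lambda>v. (PhiE ^^ m) d v - (p * h0 v + q * hinf v))"
  by (induction m) (simp_all add: PhiE_lin)

lemma PhiE_sum: "PhiE (\<lambda>v. \<Sum>j\<in>J. f j v) = (\<lambda>v. \<Sum>j\<in>J. PhiE (f j) v)"
  by (rule ext, case_tac v) (simp_all add: PhiE_def sum.distrib sum_subtractf sum_negf)

lemma fixed_form: assumes "PhiE H = H" shows "H = (\<lambda>v. H V1_1 * h0 v + H V2_2 * hinf v)"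
proof -
  have e: "\<And>v. PhiE H v = H v" using assms by simp
  note e1 = e[of V1_1] e[of V1_2] e[of V2_1] e[of V2_2] e[of V3_0] e[of V3_1] e[of V4_0] e[of V4_1] e[of V5m1] e[of V5_0]
  note e2 = e1[simplified PhiE_def, simplified]
  show ?thesis
    by (rule ext, case_tac v; simp add: h0_def hinf_def; insert e2; linarith)
qed

lemma rk_props: "1 \<le> rk d \<and> rk d \<le> 6 \<and> (PhiE ^^ rk d) d = d"
proof -
  have P: "6 \<ge> (1::nat) \<and> (Phi ^^ 6) d = d" by (simp add: Phi_eq' PhiE6)
  have "1 \<le> rk d \<and> (Phi ^^ rk d) d = d" unfolding rk_def by (rule LeastI[of _ 6], rule P)
  moreover have "rk d \<le> 6" unfolding rk_def by (rule Least_le, rule P)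
  ultimately show ?thesis by (simp add: Phi_eq')
qed

lemma hvec_alt: "hvec d = (\<lambda>v. \<Sum>j=1..rk d. (PhiE ^^ j) d v)"
  by (simp add: hvec_def Phi_eq')

lemma hvec_fixed: "PhiE (hvec d) = hvec d"
proof -
  obtain k where k: "k = rk d" by blast
  have k1: "1 \<le> k" and kk: "(PhiE ^^ k) d = d" using rk_props k by auto
  have "PhiE (hvec d) = (\<lambda>v. \<Sum>j=1..k. (PhiE ^^ Suc j) d v)"
    by (simp add: hvec_alt PhiE_sum k)
  also have "\<dots> = (\<lambda>v. \<Sum>j=Suc 1..Suc k. (PhiE ^^ j) d v)"
    by (simp only: sum.shift_bounds_cl_Suc_ivl)
  also have "\<dots> = (\<lambda>v. \<Sum>j=1..k. (PhiE ^^ j) d v)"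
  proof
    fix v
    have a: "(\<Sum>j=Suc 1..Suc k. (PhiE ^^ j) d v) = (\<Sum>j=Suc 1..k. (PhiE ^^ j) d v) + (PhiE ^^ Suc k) d v"
      using k1 by (simp add: sum.cl_ivl_Suc)
    have b: "(\<Sum>j=1..k. (PhiE ^^ j) d v) = (PhiE ^^ 1) d v + (\<Sum>j=Suc 1..k. (PhiE ^^ j) d v)"
      using k1 by (simp add: sum.atLeast_Suc_atMost)
    have c: "(PhiE ^^ Suc k) d = (PhiE ^^ 1) d" using kk by simp
    show "(\<Sum>j=Suc 1..Suc k. (PhiE ^^ j) d v) = (\<Sum>j=1..k. (PhiE ^^ j) d v)"
      using a b c by simp
  qed
  finally show ?thesis by (simp add: hvec_alt k)
qed

lemma alpha_sum: "alpha (\<lambda>v. \<Sum>j\<in>J. f j v) = (\<Sum>j\<in>J. alpha (f j))"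
  by (simp add: alpha_def sum.distrib sum_subtractf)
lemma beta_sum: "beta (\<lambda>v. \<Sum>j\<in>J. f j v) = (\<Sum>j\<in>J. beta (f j))"
  by (simp add: beta_def sum.distrib sum_subtractf sum_negf sum_distrib_left)

lemma alpha_hvec: "alpha (hvec d) = int (rk d) * alpha d"
  by (simp add: hvec_alt alpha_sum alpha_pow)
lemma beta_hvec: "beta (hvec d) = int (rk d) * beta d"
  by (simp add: hvec_alt beta_sum beta_pow)

lemma alpha_form: "alpha (\<lambda>v. c0 * h0 v + c1 * hinf v) = 6 * c0"
  by (simp add: alpha_def h0_def hinf_def)
lemma beta_form: "beta (\<lambda>v. c0 * h0 v + c1 * hinf v) = 6 * c1"
  by (simp add: beta_def h0_def hinf_def)

lemma Gcd_form: "Gcd (range (\<lambda>v. c0 * h0 v + c1 * hinf v)) = gcd c0 (c1::int)"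
proof (rule zdvd_antisym_nonneg)
  show "0 \<le> Gcd (range (\<lambda>v. c0 * h0 v + c1 * hinf v))" by simp
  show "0 \<le> gcd c0 c1" by simp
  have "Gcd (range (\<lambda>v. c0 * h0 v + c1 * hinf v)) dvd c0"
    by (rule Gcd_dvd) (rule image_eqI[of _ _ V1_1], simp_all add: h0_def hinf_def)
  moreover have "Gcd (range (\<lambda>v. c0 * h0 v + c1 * hinf v)) dvd c1"
    by (rule Gcd_dvd) (rule image_eqI[of _ _ V2_2], simp_all add: h0_def hinf_def)
  ultimately show "Gcd (range (\<lambda>v. c0 * h0 v + c1 * hinf v)) dvd gcd c0 c1" by simp
  show "gcd c0 c1 dvd Gcd (range (\<lambda>v. c0 * h0 v + c1 * hinf v))"
    by (rule Gcd_greatest) auto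
qed

lemma qform_trans: "qform (\<lambda>v. d v - (p * h0 v + q * hinf v)) = qform d"
  by (simp add: qform_def ringel_def sum_vert arrows_def Ppairs_def h0_def hinf_def algebra_simps)


lemma key:
  assumes "rk d = i"
  shows "hvec d = (\<lambda>v. hvec d V1_1 * h0 v + hvec d V2_2 * hinf v)"
    and "6 * hvec d V1_1 = int i * alpha d"
    and "6 * hvec d V2_2 = int i * beta d"
    and "ql d = gcd (hvec d V1_1) (hvec d V2_2)"
proof -
  show H: "hvec d = (\<lambda>v. hvec d V1_1 * h0 v + hvec d V2_2 * hinf v)"
    by (rule fixed_form, rule hvec_fixed)
  have "alpha (hvec d) = 6 * hvec d V1_1" by (subst H, rule alpha_form)
  then show "6 * hvec d V1_1 = int i * alpha d" using alpha_hvec assms by simp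
  have "beta (hvec d) = 6 * hvec d V2_2" by (subst H, rule beta_form)
  then show "6 * hvec d V2_2 = int i * beta d" using beta_hvec assms by simp
  show "ql d = gcd (hvec d V1_1) (hvec d V2_2)"
    unfolding ql_def by (subst H, rule Gcd_form)
qed

lemma CHAR:
  assumes i: "i \<in> {2,3,6}" and a0: "a \<ge> 0" and ab: "a = 0 \<longrightarrow> b > 0" and l: "gcd a b = l"
    and lam: "lam = (if a = 0 then None else Some (of_int b / of_int a))"
  shows "d \<in> Rsl lam l i \<longleftrightarrow> d \<in> Roots \<and> rk d = i \<and> hvec d V1_1 = a \<and> hvec d V2_2 = b"
proof
  assume d: "d \<in> Rsl lam l i"
  then have R: "d \<in> Rplus" and sl: "slope d = lam" and rk: "rk d = i" and q: "ql d = l"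
    by (auto simp: Rsl_def Rslope_def)
  have ip: "int i > 0" using i by auto
  note K = key[OF rk]
  define c0 where "c0 = hvec d V1_1"
  define c1 where "c1 = hvec d V2_2"
  have e0: "6 * c0 = int i * alpha d" using K(2) c0_def by simp
  have e1: "6 * c1 = int i * beta d" using K(3) c1_def by simp
  have g: "gcd c0 c1 = l" using K(4) q c0_def c1_def by simp
  have pos: "alpha d > 0 \<or> (alpha d = 0 \<and> beta d > 0)"
    using R by (simp add: Rplus_def ringel_hinf ringel_h0)
  have "c0 = a \<and> c1 = b"
  proof (cases "a = 0")
    case True
    then have "slope d = None" using sl lam by simp
    then have "alpha d = 0" by (simp add: slope_def ringel_hinf split: if_splits)
    then have "c0 = 0" and bp: "beta d > 0" using e0 pos by auto
    have "int i * beta d > 0" using ip bp by simp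
    then have "c1 > 0" using e1 by linarith
    then show ?thesis using g l True \<open>c0 = 0\<close> ab by simp
  next
    case False
    then have ap: "a > 0" using a0 by simp
    then have "slope d = Some (of_int b / of_int a)" using sl lam by simp
    then have an: "alpha d \<noteq> 0" and fr: "of_int (beta d) / of_int (alpha d) = (of_int b / of_int a :: rat)"
      by (simp_all add: slope_def ringel_hinf ringel_h0 split: if_splits)
    have "of_int (beta d) * of_int a = (of_int b * of_int (alpha d) :: rat)"
      using fr an ap by (simp add: frac_eq_eq)
    then have ba: "beta d * a = b * alpha d" by (metis of_int_eq_iff of_int_mult)
    have "int i * (c1 * a) = int i * (b * c0)"
    proof -
      have "6 * (int i * (c1 * a)) = int i * (int i * (beta d * a))" using e1 by (simp add: algebra_simps)
      also have "\<dots> = int i * (int i * (b * alpha d))" using ba by simp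
      also have "\<dots> = 6 * (int i * (b * c0))" using e0 by (simp add: algebra_simps)
      finally show ?thesis by simp
    qed
    then have cb: "c1 * a = b * c0" using ip by simp
    have "alpha d > 0" using an pos by auto
    then have "int i * alpha d > 0" using ip by simp
    then have c0p: "c0 > 0" using e0 by linarith
    have lp: "l > 0" using l ap by auto
    have "a * l = gcd (a * c0) (a * c1)" using g ap lp by (simp add: gcd_mult_left)
    also have "\<dots> = gcd (c0 * a) (c0 * b)" using cb by (simp add: algebra_simps)
    also have "\<dots> = c0 * l" using c0p l lp by (simp add: gcd_mult_left)
    finally have "a = c0" using lp by simp
    then show ?thesis using cb ap by simp
  qed
  then show "d \<in> Roots \<and> rk d = i \<and> hvec d V1_1 = a \<and> hvec d V2_2 = b"
    using R rk c0_def c1_def by (simp add: Rplus_def)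
next
  assume "d \<in> Roots \<and> rk d = i \<and> hvec d V1_1 = a \<and> hvec d V2_2 = b"
  then have R: "d \<in> Roots" and rk: "rk d = i" and c0: "hvec d V1_1 = a" and c1: "hvec d V2_2 = b"
    by auto
  have ip: "int i > 0" using i by auto
  note K = key[OF rk]
  have e0: "6 * a = int i * alpha d" using K(2) c0 by simp
  have e1: "6 * b = int i * beta d" using K(3) c1 by simp
  have q: "ql d = l" using K(4) c0 c1 l by simp
  show "d \<in> Rsl lam l i"
  proof (cases "a = 0")
    case True
    then have "alpha d = 0" using e0 ip by simp
    moreover have "int i * beta d > 0" using e1 ab True by linarith
    then have "beta d > 0" using ip by (simp add: zero_less_mult_iff)
    ultimately show ?thesis using R rk q True lam
      by (simp add: Rsl_def Rslope_def Rplus_def slope_def ringel_hinf ringel_h0)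
  next
    case False
    then have ap: "a > 0" using a0 by simp
    then have "int i * alpha d > 0" using e0 by linarith
    then have alp: "alpha d > 0" using ip by (simp add: zero_less_mult_iff)
    have "int i * (beta d * a) = int i * (b * alpha d)"
    proof -
      have "int i * (int i * (beta d * a)) = int i * (a * (int i * beta d))" by (simp add: algebra_simps)
      also have "\<dots> = int i * (a * (6 * b))" using e1 by simp
      also have "\<dots> = int i * (b * (6 * a))" by (simp add: algebra_simps)
      also have "\<dots> = int i * (b * (int i * alpha d))" using e0 by simp
      also have "\<dots> = int i * (int i * (b * alpha d))" by (simp add: algebra_simps)
      finally show ?thesis using ip by simp
    qed
    then have ba: "beta d * a = b * alpha d" using ip by simp
    have "of_int (beta d) / of_int (alpha d) = (of_int b / of_int a :: rat)"
      using alp ap ba by (simp add: frac_eq_eq) (metis of_int_eq_iff of_int_mult)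
    then show ?thesis using R rk q False lam alp
      by (simp add: Rsl_def Rslope_def Rplus_def slope_def ringel_hinf ringel_h0)
  qed
qed


lemma rk_trans: "rk (\<lambda>v. x v - (p * h0 v + q * hinf v)) = rk x"
proof -
  have "\<And>m. ((\<lambda>v. (PhiE ^^ m) x v - (p * h0 v + q * hinf v)) = (\<lambda>v. x v - (p * h0 v + q * hinf v))) = ((PhiE ^^ m) x = x)"
    by (auto simp: fun_eq_iff)
  then show ?thesis unfolding rk_def Phi_eq' pow_lin by simp
qed

lemma hvec_trans: "hvec (\<lambda>v. x v - (p * h0 v + q * hinf v)) = (\<lambda>v. hvec x v - int (rk x) * (p * h0 v + q * hinf v))"
  by (simp add: hvec_alt rk_trans pow_lin sum_subtractf)

lemma rk_zero: "rk (\<lambda>_. 0) = 1"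
proof -
  have "PhiE (\<lambda>_. 0) = (\<lambda>_. 0)" by (rule ext) (simp add: PhiE_def split: vert.split)
  then show ?thesis unfolding rk_def Phi_eq' by (intro Least_equality) auto
qed

theorem mainTheorem16:
  fixes lam :: "rat option" and i :: nat and l a b a' a'' b' b'' :: int
  assumes "i \<in> {2,3,6}"
    and "l > 0" and "\<not> int i dvd l"
    and "a \<ge> 0" and "gcd a b = l"
    and "(a = 0 \<and> b = l \<and> lam = None) \<or> (a > 0 \<and> lam = Some (of_int b / of_int a))"
    and "a = int i * a' + a''" and "0 \<le> a''" and "a'' \<le> int i - 1"
    and "b = int i * b' + b''" and "0 \<le> b''" and "b'' \<le> int i - 1"
  shows "Rsl lam l i = {(\<lambda>v. a' * h0 v + b' * hinf v + r v) | r. r \<in> Rbr a'' b'' i}"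
proof -
  note A = assms
  have lam: "lam = (if a = 0 then None else Some (of_int b / of_int a))" using A(6) by auto
  have ab: "a = 0 \<longrightarrow> b > 0" using A(6) A(2) by auto
  have ab2: "a'' = 0 \<longrightarrow> b'' > 0"
  proof
    assume a0: "a'' = 0"
    show "b'' > 0"
    proof (rule ccontr)
      assume "\<not> b'' > 0"
      then have "b'' = 0" using A(11) by simp
      then have "int i dvd a" "int i dvd b" using a0 A(7) A(10) by simp_all
      then have "int i dvd l" using A(5) by auto
      then show False using A(3) by simp
    qed
  qed
  have C1: "\<And>x. x \<in> Rsl lam l i \<longleftrightarrow> x \<in> Roots \<and> rk x = i \<and> hvec x V1_1 = a \<and> hvec x V2_2 = b"
    by (rule CHAR[OF A(1) A(4) ab A(5) lam])
  have C2: "\<And>x. x \<in> Rbr a'' b'' i \<longleftrightarrow> x \<in> Roots \<and> rk x = i \<and> hvec x V1_1 = a'' \<and> hvec x V2_2 = b''"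
    unfolding Rbr_def by (rule CHAR[OF A(1) A(8) ab2 refl refl])
  have i2: "i \<noteq> 1" using A(1) by auto
  have EQ: "x \<in> Rsl lam l i \<longleftrightarrow> (\<lambda>v. x v - (a' * h0 v + b' * hinf v)) \<in> Rbr a'' b'' i" for x
  proof -
    define r where "r = (\<lambda>v. x v - (a' * h0 v + b' * hinf v))"
    have rk: "rk r = rk x" unfolding r_def by (rule rk_trans)
    have hv: "hvec r = (\<lambda>v. hvec x v - int (rk x) * (a' * h0 v + b' * hinf v))"
      unfolding r_def by (rule hvec_trans)
    have q: "qform r = qform x" unfolding r_def by (rule qform_trans)
    have roots: "rk x = i \<Longrightarrow> (r \<in> Roots \<longleftrightarrow> x \<in> Roots)"
    proof -
      assume "rk x = i"
      then have "x \<noteq> (\<lambda>_. 0)" "r \<noteq> (\<lambda>_. 0)" using rk rk_zero i2 by auto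
      then show ?thesis using q by (simp add: Roots_def)
    qed
    show ?thesis unfolding C1 C2 r_def[symmetric]
      using roots rk hv A(7) A(10) by (auto simp: h0_def hinf_def)
  qed
  show ?thesis
  proof (rule set_eqI)
    fix x
    show "x \<in> Rsl lam l i \<longleftrightarrow> x \<in> {(\<lambda>v. a' * h0 v + b' * hinf v + r v) | r. r \<in> Rbr a'' b'' i}"
    proof
      assume "x \<in> Rsl lam l i"
      then have "(\<lambda>v. x v - (a' * h0 v + b' * hinf v)) \<in> Rbr a'' b'' i" using EQ by blast
      then show "x \<in> {(\<lambda>v. a' * h0 v + b' * hinf v + r v) | r. r \<in> Rbr a'' b'' i}"
        unfolding mem_Collect_eq
        by (intro exI[where x = "\<lambda>v. x v - (a' * h0 v + b' * hinf v)"]) auto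
    next
      assume "x \<in> {(\<lambda>v. a' * h0 v + b' * hinf v + r v) | r. r \<in> Rbr a'' b'' i}"
      then obtain r where x: "x = (\<lambda>v. a' * h0 v + b' * hinf v + r v)" and r: "r \<in> Rbr a'' b'' i" by blast
      have "(\<lambda>v. x v - (a' * h0 v + b' * hinf v)) = r" using x by simp
      then show "x \<in> Rsl lam l i" using EQ r by simp
    qed
  qed
qed

end
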